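(* Let $G=(V,E)$ be an acyclic finite directed graph, $\Gamma\subset V$ containing all sinks and sources with $V\setminus\Gamma\ne\emptyset$, and let $z=(z_v)_{v\in\Gamma}$ with each $z_v$ a positive multiple of $I_d$. Then at any critical point $x$ of $\Phi_d$ restricted to $\mathcal P_d^V(z)$ such that every $x_v$ ($v\in V$) is a positive multiple of $I_d$, the Hessian of this restricted function (with respect to the independent real variables $x_v(i,j)$, $v\in V\setminus\Gamma$, $1\le i\le j\le d$) is positive definite.
   Context: $v\to w$ denotes an edge; sinks have no outgoing edges, sources no incoming edges. $\mathcal P_d$: $d\times d$ real symmetric positive definite matrices. $\mathcal P_d^V(z)=\{x=(x_v)_{v\in V}\in\mathcal P_d^V:x_v=z_v\ \forall v\in\Gamma\}$. $\Phi_d(x)=\sum_{v\to w}\operatorname{tr}[x_vx_w^{-1}]$ for $x\in\mathcal P_d^V$. *)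

theory Defs
  imports "HOL-Analysis.Analysis"
begin

definition sinks :: "'v set \<Rightarrow> ('v \<times> 'v) set \<Rightarrow> 'v set" where
  "sinks V E = {v \<in> V. \<forall>w. (v, w) \<notin> E}"

definition sources :: "'v set \<Rightarrow> ('v \<times> 'v) set \<Rightarrow> 'v set" where
  "sources V E = {v \<in> V. \<forall>w. (w, v) \<notin> E}"

definition Phi :: "('v \<times> 'v) set \<Rightarrow> ('v \<Rightarrow> real^'d::{finite,linorder}^'d::{finite,linorder}) \<Rightarrow> real" where
  "Phi E x = (\<Sum>(v, w)\<in>E. trace (x v ** matrix_inv (x w)))"

definition sym_of :: "('d::{finite,linorder} \<Rightarrow> 'd::{finite,linorder} \<Rightarrow> real) \<Rightarrow> real^'d::{finite,linorder}^'d::{finite,linorder}" where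
  "sym_of y = (\<chi> i j. if i \<le> j then y i j else y j i)"

(* the point of P_d^V(z) determined by the free coordinates y (used for v \<notin> \<Gamma>) *)
definition assemble :: "'v set \<Rightarrow> ('v \<Rightarrow> real^'d::{finite,linorder}^'d::{finite,linorder}) \<Rightarrow> ('v \<Rightarrow> 'd::{finite,linorder} \<Rightarrow> 'd::{finite,linorder} \<Rightarrow> real)
    \<Rightarrow> 'v \<Rightarrow> real^'d::{finite,linorder}^'d::{finite,linorder}" where
  "assemble \<Gamma> z y v = (if v \<in> \<Gamma> then z v else sym_of (y v))"

definition Phi_restr :: "('v \<times> 'v) set \<Rightarrow> 'v set \<Rightarrow> ('v \<Rightarrow> real^'d::{finite,linorder}^'d::{finite,linorder})
    \<Rightarrow> ('v \<Rightarrow> 'd::{finite,linorder} \<Rightarrow> 'd::{finite,linorder} \<Rightarrow> real) \<Rightarrow> real" where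
  "Phi_restr E \<Gamma> z y = Phi E (assemble \<Gamma> z y)"

definition coords :: "'v set \<Rightarrow> 'v set \<Rightarrow> ('v \<times> 'd::{finite,linorder} \<times> 'd::{finite,linorder}) set" where
  "coords V \<Gamma> = {(v, i, j). v \<in> V - \<Gamma> \<and> i \<le> j}"

definition shift :: "('v \<Rightarrow> 'd::{finite,linorder} \<Rightarrow> 'd::{finite,linorder} \<Rightarrow> real) \<Rightarrow> 'v \<times> 'd::{finite,linorder} \<times> 'd::{finite,linorder} \<Rightarrow> real \<Rightarrow> ('v \<Rightarrow> 'd::{finite,linorder} \<Rightarrow> 'd::{finite,linorder} \<Rightarrow> real)" where
  "shift y a t = (case a of (v, i, j) \<Rightarrow> y(v := (y v)(i := (y v i)(j := y v i j + t))))"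

definition partial :: "(('v \<Rightarrow> 'd::{finite,linorder} \<Rightarrow> 'd::{finite,linorder} \<Rightarrow> real) \<Rightarrow> real) \<Rightarrow> ('v \<Rightarrow> 'd::{finite,linorder} \<Rightarrow> 'd::{finite,linorder} \<Rightarrow> real)
    \<Rightarrow> 'v \<times> 'd::{finite,linorder} \<times> 'd::{finite,linorder} \<Rightarrow> real" where
  "partial f y a = deriv (\<lambda>t. f (shift y a t)) 0"

definition hessian :: "(('v \<Rightarrow> 'd::{finite,linorder} \<Rightarrow> 'd::{finite,linorder} \<Rightarrow> real) \<Rightarrow> real) \<Rightarrow> ('v \<Rightarrow> 'd::{finite,linorder} \<Rightarrow> 'd::{finite,linorder} \<Rightarrow> real)
    \<Rightarrow> 'v \<times> 'd::{finite,linorder} \<times> 'd::{finite,linorder} \<Rightarrow> 'v \<times> 'd::{finite,linorder} \<times> 'd::{finite,linorder} \<Rightarrow> real" where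
  "hessian f y a b = deriv (\<lambda>t. partial f (shift y b t) a) 0"

end

theory Submission
  imports Defs
begin

lemma matrix_inv_props:
  fixes A :: "real^'n^'n"
  assumes "invertible A"
  shows "A ** matrix_inv A = mat 1" "matrix_inv A ** A = mat 1"
  using someI_ex[OF assms[unfolded invertible_def]] unfolding matrix_inv_def by auto

lemma matrix_inv_unique:
  fixes A B :: "real^'n^'n"
  assumes "invertible A" "A ** B = mat 1"
  shows "matrix_inv A = B"
proof -
  have "matrix_inv A = matrix_inv A ** (A ** B)" using assms by (simp add: matrix_mul_rid)
  also have "\<dots> = (matrix_inv A ** A) ** B" by (simp add: matrix_mul_assoc)
  also have "\<dots> = B" using matrix_inv_props(2)[OF assms(1)] by (simp add: matrix_mul_lid)
  finally show ?thesis .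
qed

lemma mmul_scaleR_left: "(c *\<^sub>R A) ** B = c *\<^sub>R (A ** (B::real^'n^'k)) " for A :: "real^'k^'m"
  by (simp add: matrix_matrix_mult_def vec_eq_iff sum_distrib_left mult.assoc)

lemma mmul_scaleR_right: "A ** (c *\<^sub>R B) = c *\<^sub>R (A ** (B::real^'n^'k)) " for A :: "real^'k^'m"
  by (simp add: matrix_matrix_mult_def vec_eq_iff sum_distrib_left mult.left_commute)

lemma trace_scaleR: "trace (c *\<^sub>R (A::real^'n^'n)) = c * trace A"
  by (simp add: trace_def sum_distrib_left)

lemma scalar_inv:
  assumes "c \<noteq> 0"
  shows "invertible (c *\<^sub>R (mat 1::real^'n^'n))" "matrix_inv (c *\<^sub>R (mat 1::real^'n^'n)) = (1/c) *\<^sub>R mat 1"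
proof -
  have e: "(c *\<^sub>R (mat 1::real^'n^'n)) ** ((1/c) *\<^sub>R mat 1) = mat 1"
    "((1/c) *\<^sub>R (mat 1::real^'n^'n)) ** (c *\<^sub>R mat 1) = mat 1"
    using assms by (simp_all add: mmul_scaleR_left mmul_scaleR_right matrix_mul_lid)
  then show i: "invertible (c *\<^sub>R (mat 1::real^'n^'n))" unfolding invertible_def by blast
  show "matrix_inv (c *\<^sub>R (mat 1::real^'n^'n)) = (1/c) *\<^sub>R mat 1"
    by (rule matrix_inv_unique[OF i e(1)])
qed

definition MD :: "(real \<Rightarrow> real^'n^'m) \<Rightarrow> real^'n^'m \<Rightarrow> real \<Rightarrow> bool" where
  "MD F F' t0 \<longleftrightarrow> (\<forall>i j. ((\<lambda>t. F t $ i $ j) has_field_derivative F' $ i $ j) (at t0))"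

lemma MD_const: "MD (\<lambda>t. A) 0 t0"
  unfolding MD_def by (auto intro!: derivative_eq_intros)

lemma MD_affine: "MD (\<lambda>t. A + t *\<^sub>R P) P t0"
  unfolding MD_def by (auto intro!: derivative_eq_intros)

lemma MD_add: "MD F F' t0 \<Longrightarrow> MD G G' t0 \<Longrightarrow> MD (\<lambda>t. F t + G t) (F' + G') t0"
  unfolding MD_def by (auto intro!: derivative_eq_intros)

lemma MD_diff: "MD F F' t0 \<Longrightarrow> MD G G' t0 \<Longrightarrow> MD (\<lambda>t. F t - G t) (F' - G') t0"
  unfolding MD_def by (auto intro!: derivative_eq_intros)

lemma MD_mult:
  fixes F :: "real \<Rightarrow> real^'k^'m" and G :: "real \<Rightarrow> real^'n^'k"
  assumes "MD F F' t0" "MD G G' t0"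
  shows "MD (\<lambda>t. F t ** G t) (F' ** G t0 + F t0 ** G') t0"
  unfolding MD_def matrix_matrix_mult_def
proof (intro allI)
  fix i j
  have "((\<lambda>t. \<Sum>k\<in>UNIV. F t $ i $ k * G t $ k $ j) has_field_derivative
     (\<Sum>k\<in>UNIV. F' $ i $ k * G t0 $ k $ j + G' $ k $ j * F t0 $ i $ k)) (at t0)"
    using assms unfolding MD_def by (auto intro!: derivative_eq_intros)
  then show "((\<lambda>t. (\<chi> i j. \<Sum>k\<in>UNIV. F t $ i $ k * G t $ k $ j) $ i $ j) has_field_derivative
          ((\<chi> i j. \<Sum>k\<in>UNIV. F' $ i $ k * G t0 $ k $ j) + (\<chi> i j. \<Sum>k\<in>UNIV. F t0 $ i $ k * G' $ k $ j)) $ i $ j) (at t0)"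
    by (simp add: sum.distrib mult.commute)
qed

lemma MD_trace: "MD F F' t0 \<Longrightarrow> ((\<lambda>t. trace (F t)) has_field_derivative trace F') (at t0)"
  unfolding MD_def trace_def by (auto intro!: derivative_eq_intros)

lemma MD_cong_ev:
  assumes "eventually (\<lambda>t. F t = G t) (nhds t0)" "MD F F' t0"
  shows "MD G F' t0"
  unfolding MD_def
proof (intro allI)
  fix i j
  have ev: "eventually (\<lambda>t. F t $ i $ j = G t $ i $ j) (nhds t0)"
    using assms(1) by (auto elim: eventually_mono)
  have d: "((\<lambda>t. F t $ i $ j) has_field_derivative F' $ i $ j) (at t0)"
    using assms(2) unfolding MD_def by blast
  show "((\<lambda>t. G t $ i $ j) has_field_derivative F' $ i $ j) (at t0)"
    using DERIV_cong_ev[OF refl ev refl] d by blast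
qed

lemma prod_differentiable:
  fixes f :: "'i \<Rightarrow> real \<Rightarrow> real"
  assumes "finite S" "\<And>i. i \<in> S \<Longrightarrow> f i differentiable (at t0)"
  shows "(\<lambda>t. \<Prod>i\<in>S. f i t) differentiable (at t0)"
  using assms by (induction S rule: finite_induct) auto

lemma det_differentiable:
  fixes F :: "real \<Rightarrow> real^'n^'n"
  assumes "\<And>i j. (\<lambda>t. F t $ i $ j) differentiable (at t0)"
  shows "(\<lambda>t. det (F t)) differentiable (at t0)"
  unfolding det_def
  by (intro differentiable_sum differentiable_mult prod_differentiable ballI differentiable_const
       finite_permutations assms) simp_all

lemma MD_entry_diff: "MD F F' t0 \<Longrightarrow> (\<lambda>t. F t $ i $ j) differentiable (at t0)"
  unfolding MD_def real_differentiable_def by blast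


lemma mmul_neg_right: "A ** (- B) = - (A ** (B::real^'n^'k))" for A :: "real^'k^'m"
  by (simp add: matrix_matrix_mult_def vec_eq_iff sum_negf)

lemma MD_unique: "MD F A t0 \<Longrightarrow> MD F B t0 \<Longrightarrow> A = B"
  unfolding MD_def vec_eq_iff using DERIV_unique by blast

lemma MD_inv:
  fixes Y :: "real \<Rightarrow> real^'n^'n"
  assumes Y: "MD Y Y' t0" and inv: "invertible (Y t0)"
  shows "MD (\<lambda>t. matrix_inv (Y t)) (- (matrix_inv (Y t0) ** Y' ** matrix_inv (Y t0))) t0"
proof -
  have dd: "(\<lambda>t. det (Y t)) differentiable (at t0)"
    using det_differentiable MD_entry_diff[OF Y] by blast
  have "isCont (\<lambda>t. det (Y t)) t0"
    using differentiable_imp_continuous_within[OF dd] by simp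
  moreover have "det (Y t0) \<noteq> 0" using inv invertible_det_nz by blast
  ultimately obtain e where e: "e > 0" "\<forall>t. dist t0 t < e \<longrightarrow> det (Y t) \<noteq> 0"
    using continuous_at_avoid by blast
  have ev: "eventually (\<lambda>t. det (Y t) \<noteq> 0) (nhds t0)"
    unfolding eventually_nhds_metric using e by (auto simp: dist_commute)
  define C where "C t = (\<chi> k j. det (\<chi> i l. if l = k then (\<chi> i. (mat 1::real^'n^'n) $ i $ j) $ i else Y t $ i $ l) / det (Y t))" for t
  have eqC: "matrix_inv (Y t) = C t" if dt: "det (Y t) \<noteq> 0" for t
  proof -
    have it: "invertible (Y t)" using dt invertible_det_nz by blast
    have "matrix_inv (Y t) $ k $ j = C t $ k $ j" for k j
    proof -
      define x where "x = (\<chi> k. matrix_inv (Y t) $ k $ j)"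
      have "Y t *v x = (\<chi> i. (mat 1::real^'n^'n) $ i $ j)"
        using matrix_inv_props(1)[OF it]
        by (simp add: x_def vec_eq_iff matrix_vector_mult_def matrix_matrix_mult_def flip: vec_eq_iff)
           (metis (no_types, lifting) UNIV_I vec_lambda_beta)
      then have "x = (\<chi> k. det(\<chi> i l. if l=k then (\<chi> i. (mat 1::real^'n^'n) $ i $ j)$i else Y t$i$l) / det (Y t))"
        using cramer[OF dt] by blast
      then show ?thesis unfolding C_def x_def vec_eq_iff by simp
    qed
    then show ?thesis by (simp add: vec_eq_iff)
  qed
  have dC: "(\<lambda>t. C t $ k $ j) differentiable (at t0)" for k j
  proof -
    have "(\<lambda>t. det (\<chi> i l. if l = k then (\<chi> i. (mat 1::real^'n^'n) $ i $ j) $ i else Y t $ i $ l)) differentiable (at t0)"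
      apply (rule det_differentiable)
      subgoal for i ja by (cases "ja = k") (auto intro: MD_entry_diff[OF Y])
      done
    then show ?thesis unfolding C_def using dd \<open>det (Y t0) \<noteq> 0\<close> by (auto intro!: differentiable_divide)
  qed
  have "\<forall>k j. \<exists>d. ((\<lambda>t. C t $ k $ j) has_field_derivative d) (at t0)"
    using dC real_differentiable_def by blast
  then obtain D where D: "\<And>k j. ((\<lambda>t. C t $ k $ j) has_field_derivative D k j) (at t0)"
    by metis
  have "MD C (\<chi> k j. D k j) t0" unfolding MD_def using D by simp
  then have MI: "MD (\<lambda>t. matrix_inv (Y t)) (\<chi> k j. D k j) t0"
    by (rule MD_cong_ev[rotated]) (use ev eqC in \<open>auto elim: eventually_mono\<close>)
  have p1: "MD (\<lambda>t. Y t ** matrix_inv (Y t)) (Y' ** matrix_inv (Y t0) + Y t0 ** (\<chi> k j. D k j)) t0"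
    using MD_mult[OF Y MI] .
  have "MD (\<lambda>t. Y t ** matrix_inv (Y t)) 0 t0"
    by (rule MD_cong_ev[OF _ MD_const[of "mat 1"]])
       (use ev in \<open>auto elim!: eventually_mono simp: matrix_inv_props(1) invertible_det_nz[symmetric]\<close>)
  then have "Y' ** matrix_inv (Y t0) + Y t0 ** (\<chi> k j. D k j) = 0" using MD_unique p1 by metis
  then have "Y t0 ** (\<chi> k j. D k j) = - (Y' ** matrix_inv (Y t0))"
    by (simp add: eq_neg_iff_add_eq_0 add.commute)
  then have "matrix_inv (Y t0) ** (Y t0 ** (\<chi> k j. D k j)) = matrix_inv (Y t0) ** (- (Y' ** matrix_inv (Y t0)))"
    by simp
  then have "(\<chi> k j. D k j) = - (matrix_inv (Y t0) ** Y' ** matrix_inv (Y t0))"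
    by (simp add: matrix_mul_assoc matrix_inv_props(2)[OF inv] mmul_neg_right)
  with MI show ?thesis by simp
qed


lemma scalar_pos:
  fixes c x :: "'v \<Rightarrow> real" and V \<Gamma> :: "'v set" and E :: "('v \<times> 'v) set"
  assumes fin: "finite V" and EV: "E \<subseteq> V \<times> V" and acyc: "acyclic E"
    and sk: "sinks V E \<subseteq> \<Gamma>"
    and cpos: "\<forall>v\<in>V. c v > 0" and x0: "\<forall>v\<in>\<Gamma>. x v = 0"
    and crit: "\<forall>u\<in>V-\<Gamma>. (\<Sum>(v,w)\<in>E. (if v = u then 1 / c w else 0) - (if w = u then c v / (c w)^2 else 0)) = 0"
  shows "(\<Sum>(v,w)\<in>E. c v * (x w)^2 / (c w)^3 - x v * x w / (c w)^2) \<ge> 0"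
    and "(\<exists>u\<in>V. x u \<noteq> 0) \<Longrightarrow> (\<Sum>(v,w)\<in>E. c v * (x w)^2 / (c w)^3 - x v * x w / (c w)^2) > 0"
proof -
  have finE: "finite E" using fin EV finite_subset by blast
  define b where "b v = x v / c v" for v
  define r where "r v w = c v / c w" for v w
  have tm: "c v * (x w)^2 / (c w)^3 - x v * x w / (c w)^2
        = r v w / 2 * (b v - b w)^2 + r v w / 2 * ((b w)^2 - (b v)^2)" if "(v,w) \<in> E" for v w
  proof -
    have "c v > 0" "c w > 0" using that EV cpos by auto
    then show ?thesis unfolding b_def r_def by (simp add: field_simps power2_eq_square power3_eq_cube)
  qed
  have S2: "(\<Sum>(v,w)\<in>E. r v w / 2 * ((b w)^2 - (b v)^2)) = 0"
  proof -
    have "(\<Sum>(v,w)\<in>E. r v w / 2 * ((b w)^2 - (b v)^2))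
       = (\<Sum>(v,w)\<in>E. \<Sum>u\<in>V. (b u)^2 * ((if w = u then r v w / 2 else 0) - (if v = u then r v w / 2 else 0)))"
    proof (rule sum.cong[OF refl], clarify)
      fix v w assume "(v,w) \<in> E"
      then have "v \<in> V" "w \<in> V" using EV by auto
      then show "r v w / 2 * ((b w)^2 - (b v)^2) =
         (\<Sum>u\<in>V. (b u)^2 * ((if w = u then r v w / 2 else 0) - (if v = u then r v w / 2 else 0)))"
        using fin by (simp add: right_diff_distrib sum_subtractf if_distrib[of "\<lambda>t. (b _)^2 * t"] sum.delta algebra_simps cong: if_cong)
    qed
    also have "\<dots> = (\<Sum>u\<in>V. (b u)^2 * (\<Sum>(v,w)\<in>E. (if w = u then r v w / 2 else 0) - (if v = u then r v w / 2 else 0)))"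
      unfolding sum_distrib_left split_def by (rule sum.swap)
    also have "\<dots> = 0"
    proof (rule sum.neutral, rule ballI)
      fix u assume u: "u \<in> V"
      show "(b u)^2 * (\<Sum>(v,w)\<in>E. (if w = u then r v w / 2 else 0) - (if v = u then r v w / 2 else 0)) = 0"
      proof (cases "u \<in> \<Gamma>")
        case True then show ?thesis using x0 by (simp add: b_def)
      next
        case False
        have cu: "c u > 0" using u cpos by auto
        have "(\<Sum>(v,w)\<in>E. (if w = u then r v w / 2 else 0) - (if v = u then r v w / 2 else 0))
           = (\<Sum>(v,w)\<in>E. (- c u / 2) * ((if v = u then 1 / c w else 0) - (if w = u then c v / (c w)^2 else 0)))"
          by (rule sum.cong[OF refl]) (use cu in \<open>auto simp: r_def field_simps power2_eq_square\<close>)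
        also have "\<dots> = (- c u / 2) * (\<Sum>(v,w)\<in>E. (if v = u then 1 / c w else 0) - (if w = u then c v / (c w)^2 else 0))"
          by (simp add: sum_distrib_left split_def)
        also have "\<dots> = 0" using crit False u by simp
        finally show ?thesis by simp
      qed
    qed
    finally show ?thesis .
  qed
  have eqT: "(\<Sum>(v,w)\<in>E. c v * (x w)^2 / (c w)^3 - x v * x w / (c w)^2) = (\<Sum>(v,w)\<in>E. r v w / 2 * (b v - b w)^2)"
  proof -
    have "(\<Sum>(v,w)\<in>E. c v * (x w)^2 / (c w)^3 - x v * x w / (c w)^2)
       = (\<Sum>(v,w)\<in>E. r v w / 2 * (b v - b w)^2 + r v w / 2 * ((b w)^2 - (b v)^2))"
      by (rule sum.cong[OF refl]) (use tm in auto)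
    also have "\<dots> = (\<Sum>(v,w)\<in>E. r v w / 2 * (b v - b w)^2) + (\<Sum>(v,w)\<in>E. r v w / 2 * ((b w)^2 - (b v)^2))"
      by (simp add: split_def sum.distrib)
    finally show ?thesis using S2 by simp
  qed
  have nn: "\<forall>e\<in>E. (case e of (v,w) \<Rightarrow> r v w / 2 * (b v - b w)^2) \<ge> 0"
  proof (clarify)
    fix v w assume "(v,w) \<in> E"
    then have "c v > 0" "c w > 0" using EV cpos by auto
    then show "r v w / 2 * (b v - b w)^2 \<ge> 0" unfolding r_def by simp
  qed
  show "(\<Sum>(v,w)\<in>E. c v * (x w)^2 / (c w)^3 - x v * x w / (c w)^2) \<ge> 0"
    unfolding eqT using nn by (intro sum_nonneg) auto
  assume ex: "\<exists>u\<in>V. x u \<noteq> 0"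
  show "(\<Sum>(v,w)\<in>E. c v * (x w)^2 / (c w)^3 - x v * x w / (c w)^2) > 0"
  proof (rule ccontr)
    assume "\<not> ?thesis"
    then have z: "(\<Sum>(v,w)\<in>E. r v w / 2 * (b v - b w)^2) = 0"
      using eqT nn sum_nonneg[of E "\<lambda>(v,w). r v w / 2 * (b v - b w)^2"] by auto
    have edge: "b v = b w" if "(v,w) \<in> E" for v w
    proof -
      have "r v w / 2 * (b v - b w)^2 = 0"
        using sum_nonneg_eq_0_iff[OF finE, of "\<lambda>(v,w). r v w / 2 * (b v - b w)^2"] z nn that by auto
      moreover have "r v w > 0" using that EV cpos by (auto simp: r_def)
      ultimately show ?thesis by simp
    qed
    have wf: "wf (E\<inverse>)" using finite_acyclic_wf_converse[OF finE acyc] .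
    have "v \<in> V \<longrightarrow> b v = 0" for v
    proof (induction v rule: wf_induct[OF wf])
      case (1 v)
      show ?case
      proof
        assume v: "v \<in> V"
        show "b v = 0"
        proof (cases "v \<in> \<Gamma>")
          case True then show ?thesis using x0 by (simp add: b_def)
        next
          case False
          then have "v \<notin> sinks V E" using sk by auto
          then obtain w where w: "(v,w) \<in> E" using v unfolding sinks_def by auto
          then have "w \<in> V" using EV by auto
          then have "b w = 0" using 1 w by auto
          then show ?thesis using edge[OF w] by simp
        qed
      qed
    qed
    then show False using ex cpos unfolding b_def by (metis divide_eq_0_iff less_irrefl)
  qed
qed


lemma trace_neg: "trace (- (A::real^'n^'n)) = - trace A"
  by (simp add: trace_def sum_negf)

lemma mmul_neg_left: "(- A) ** (B::real^'n^'k) = - (A ** B)" for A :: "real^'k^'m"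
  by (simp add: matrix_matrix_mult_def vec_eq_iff sum_negf)

lemma edge_deriv:
  fixes B R :: "'v \<Rightarrow> real^'n^'n"
  assumes inv: "invertible (B w + tz *\<^sub>R R w)"
  shows "((\<lambda>t. trace ((B v + t *\<^sub>R R v) ** matrix_inv (B w + t *\<^sub>R R w))) has_field_derivative
     (trace (R v ** matrix_inv (B w + tz *\<^sub>R R w)) - trace ((B v + tz *\<^sub>R R v) ** (matrix_inv (B w + tz *\<^sub>R R w) ** R w ** matrix_inv (B w + tz *\<^sub>R R w))))) (at tz)"
proof -
  have "MD (\<lambda>t. matrix_inv (B w + t *\<^sub>R R w)) (- (matrix_inv (B w + tz *\<^sub>R R w) ** R w ** matrix_inv (B w + tz *\<^sub>R R w))) tz"
    using MD_inv[OF MD_affine inv] .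
  from MD_trace[OF MD_mult[OF MD_affine this]] show ?thesis
    by (rule DERIV_cong) (simp only: trace_add mmul_neg_right trace_neg diff_conv_add_uminus)
qed

lemma Phi_deriv:
  fixes B R :: "'v \<Rightarrow> real^'d::{finite,linorder}^'d::{finite,linorder}"
  assumes inv: "\<forall>(v,w)\<in>E. invertible (B w + t0 *\<^sub>R R w)"
  shows "((\<lambda>t. Phi E (\<lambda>v. B v + t *\<^sub>R R v)) has_field_derivative
     (\<Sum>(v,w)\<in>E. trace (R v ** matrix_inv (B w + t0 *\<^sub>R R w)) - trace ((B v + t0 *\<^sub>R R v) ** (matrix_inv (B w + t0 *\<^sub>R R w) ** R w ** matrix_inv (B w + t0 *\<^sub>R R w))))) (at t0)"
  unfolding Phi_def
proof (rule DERIV_sum)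
  fix e assume "e \<in> E"
  then obtain v w where e: "e = (v,w)" "(v,w) \<in> E" by (cases e) auto
  then have "invertible (B w + t0 *\<^sub>R R w)" using inv by auto
  from edge_deriv[where B=B and R=R and w=w and tz=t0 and v=v, OF this] show "((\<lambda>t. case e of (v, w) \<Rightarrow> trace ((B v + t *\<^sub>R R v) ** matrix_inv (B w + t *\<^sub>R R w))) has_field_derivative
    (case e of (v, w) \<Rightarrow> trace (R v ** matrix_inv (B w + t0 *\<^sub>R R w)) - trace ((B v + t0 *\<^sub>R R v) ** (matrix_inv (B w + t0 *\<^sub>R R w) ** R w ** matrix_inv (B w + t0 *\<^sub>R R w))))) (at t0)"
    by (simp only: e prod.case)
qed

definition Dm :: "'v set \<Rightarrow> 'v \<times> 'd::{finite,linorder} \<times> 'd::{finite,linorder} \<Rightarrow> 'v \<Rightarrow> real^'d::{finite,linorder}^'d::{finite,linorder}" where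
  "Dm \<Gamma> a v = (case a of (u,i,j) \<Rightarrow> if v = u \<and> v \<notin> \<Gamma> then sym_of (\<lambda>p q. if p = i \<and> q = j then 1 else 0) else 0)"

lemma sym_of_upd: "sym_of (f(i := (f i)(j := f i j + t))) = sym_of f + t *\<^sub>R sym_of (\<lambda>p q. if p = i \<and> q = j then 1 else 0)"
  unfolding sym_of_def vec_eq_iff by auto

lemma assemble_shift: "assemble \<Gamma> z (shift y a t) = (\<lambda>v. assemble \<Gamma> z y v + t *\<^sub>R Dm \<Gamma> a v)"
proof
  fix v
  obtain u i j where a: "a = (u,i,j)" by (cases a) auto
  show "assemble \<Gamma> z (shift y a t) v = assemble \<Gamma> z y v + t *\<^sub>R Dm \<Gamma> a v"
  proof (cases "v \<in> \<Gamma>")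
    case True then show ?thesis by (simp add: assemble_def Dm_def a)
  next
    case False
    show ?thesis
    proof (cases "v = u")
      case True then show ?thesis using False by (simp add: assemble_def Dm_def a shift_def sym_of_upd)
    next
      case F2: False then show ?thesis using False by (simp add: assemble_def Dm_def a shift_def)
    qed
  qed
qed
lemma partial_formula:
  assumes "\<forall>(v,w)\<in>E. invertible (assemble \<Gamma> z y w)"
  shows "partial (Phi_restr E \<Gamma> z) y a = (\<Sum>(v,w)\<in>E. trace (Dm \<Gamma> a v ** matrix_inv (assemble \<Gamma> z y w))
     - trace (assemble \<Gamma> z y v ** (matrix_inv (assemble \<Gamma> z y w) ** Dm \<Gamma> a w ** matrix_inv (assemble \<Gamma> z y w))))"
  unfolding partial_def Phi_restr_def assemble_shift
  apply (rule DERIV_imp_deriv)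
  using Phi_deriv[of E "assemble \<Gamma> z y" 0 "Dm \<Gamma> a"] assms by simp

lemma MD_inv_ev:
  fixes Y :: "real \<Rightarrow> real^'n^'n"
  assumes Y: "MD Y Y' t0" and inv: "invertible (Y t0)"
  shows "eventually (\<lambda>t. invertible (Y t)) (nhds t0)"
proof -
  have dd: "(\<lambda>t. det (Y t)) differentiable (at t0)"
    using det_differentiable MD_entry_diff[OF Y] by blast
  have "isCont (\<lambda>t. det (Y t)) t0"
    using differentiable_imp_continuous_within[OF dd] by simp
  moreover have "det (Y t0) \<noteq> 0" using inv invertible_det_nz by blast
  ultimately obtain e where e: "e > 0" "\<forall>t. dist t0 t < e \<longrightarrow> det (Y t) \<noteq> 0"
    using continuous_at_avoid by blast
  have "\<forall>t. dist t t0 < e \<longrightarrow> invertible (Y t)" using e(2) invertible_det_nz dist_commute by metis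
  then show ?thesis unfolding eventually_nhds_metric using e(1) by blast
qed

lemma edge_hess:
  fixes Pv Pw Qv Qw :: "real^'n^'n"
  assumes cv: "cv > 0" and cw: "cw > 0"
  shows "((\<lambda>t. trace (Qv ** matrix_inv (cw *\<^sub>R mat 1 + t *\<^sub>R Pw))
      - trace ((cv *\<^sub>R mat 1 + t *\<^sub>R Pv) ** (matrix_inv (cw *\<^sub>R mat 1 + t *\<^sub>R Pw) ** Qw ** matrix_inv (cw *\<^sub>R mat 1 + t *\<^sub>R Pw))))
      has_field_derivative (2 * cv / cw^3 * trace (Qw ** Pw) - (trace (Qv ** Pw) + trace (Pv ** Qw)) / cw^2)) (at 0)"
proof -
  define I0 :: "real^'n^'n" where "I0 = (1/cw) *\<^sub>R mat 1"
  have i0: "invertible (cw *\<^sub>R mat 1 + 0 *\<^sub>R Pw)" "matrix_inv (cw *\<^sub>R mat 1 + 0 *\<^sub>R Pw) = I0"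
    using scalar_inv[of cw] cw by (auto simp: I0_def)
  define N where "N = - (I0 ** Pw ** I0)"
  have MI: "MD (\<lambda>t. matrix_inv (cw *\<^sub>R mat 1 + t *\<^sub>R Pw)) N 0"
    using MD_inv[OF MD_affine i0(1)] unfolding i0(2) N_def .
  have M1: "MD (\<lambda>t. Qv ** matrix_inv (cw *\<^sub>R mat 1 + t *\<^sub>R Pw)) (0 ** I0 + Qv ** N) 0"
    using MD_mult[OF MD_const MI] i0 by simp
  have M2: "MD (\<lambda>t. matrix_inv (cw *\<^sub>R mat 1 + t *\<^sub>R Pw) ** Qw) (N ** Qw + I0 ** 0) 0"
    using MD_mult[OF MI MD_const] i0 by simp
  have M3: "MD (\<lambda>t. matrix_inv (cw *\<^sub>R mat 1 + t *\<^sub>R Pw) ** Qw ** matrix_inv (cw *\<^sub>R mat 1 + t *\<^sub>R Pw))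
       ((N ** Qw + I0 ** 0) ** I0 + (I0 ** Qw) ** N) 0"
    using MD_mult[OF M2 MI] i0 by simp
  have M4: "MD (\<lambda>t. (cv *\<^sub>R mat 1 + t *\<^sub>R Pv) ** (matrix_inv (cw *\<^sub>R mat 1 + t *\<^sub>R Pw) ** Qw ** matrix_inv (cw *\<^sub>R mat 1 + t *\<^sub>R Pw)))
       (Pv ** (I0 ** Qw ** I0) + (cv *\<^sub>R mat 1) ** ((N ** Qw + I0 ** 0) ** I0 + (I0 ** Qw) ** N)) 0"
    using MD_mult[OF MD_affine M3] i0 by simp
  have D: "((\<lambda>t. trace (Qv ** matrix_inv (cw *\<^sub>R mat 1 + t *\<^sub>R Pw))
      - trace ((cv *\<^sub>R mat 1 + t *\<^sub>R Pv) ** (matrix_inv (cw *\<^sub>R mat 1 + t *\<^sub>R Pw) ** Qw ** matrix_inv (cw *\<^sub>R mat 1 + t *\<^sub>R Pw))))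
      has_field_derivative (trace (0 ** I0 + Qv ** N) - trace (Pv ** (I0 ** Qw ** I0) + (cv *\<^sub>R mat 1) ** ((N ** Qw + I0 ** 0) ** I0 + (I0 ** Qw) ** N)))) (at 0)"
    by (rule DERIV_diff[OF MD_trace[OF M1] MD_trace[OF M4]])
  have "trace (0 ** I0 + Qv ** N) - trace (Pv ** (I0 ** Qw ** I0) + (cv *\<^sub>R mat 1) ** ((N ** Qw + I0 ** 0) ** I0 + (I0 ** Qw) ** N))
      = 2 * cv / cw^3 * trace (Qw ** Pw) - (trace (Qv ** Pw) + trace (Pv ** Qw)) / cw^2"
    using cw trace_mul_sym[of Pw Qw]
    by (simp add: N_def I0_def mmul_scaleR_left mmul_scaleR_right mmul_neg_right mmul_neg_left trace_add trace_sub trace_scaleR trace_neg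
        power2_eq_square power3_eq_cube field_simps)
  with D show ?thesis by simp
qed


lemma hess_formula:
  fixes c :: "'v \<Rightarrow> real"
  assumes finV: "finite V" and EV: "E \<subseteq> V \<times> V"
    and cA: "\<forall>v\<in>V. c v > 0 \<and> assemble \<Gamma> z y v = c v *\<^sub>R mat 1"
  shows "hessian (Phi_restr E \<Gamma> z) y a b = (\<Sum>(v,w)\<in>E. 2 * c v / c w^3 * trace (Dm \<Gamma> a w ** Dm \<Gamma> b w)
            - (trace (Dm \<Gamma> a v ** Dm \<Gamma> b w) + trace (Dm \<Gamma> b v ** Dm \<Gamma> a w)) / c w^2)"
proof -
  define P where "P = Dm \<Gamma> b"
  define Q where "Q = Dm \<Gamma> a"
  define G where "G t = (\<Sum>(v,w)\<in>E. trace (Q v ** matrix_inv (c w *\<^sub>R mat 1 + t *\<^sub>R P w))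
      - trace ((c v *\<^sub>R mat 1 + t *\<^sub>R P v) ** (matrix_inv (c w *\<^sub>R mat 1 + t *\<^sub>R P w) ** Q w ** matrix_inv (c w *\<^sub>R mat 1 + t *\<^sub>R P w))))" for t
  have evw: "\<forall>w\<in>V. eventually (\<lambda>t. invertible (c w *\<^sub>R mat 1 + t *\<^sub>R P w)) (nhds 0)"
  proof
    fix w assume "w \<in> V"
    then have "c w \<noteq> 0" using cA by auto
    then have "invertible (c w *\<^sub>R mat 1 + 0 *\<^sub>R P w)" using scalar_inv(1) by simp
    from MD_inv_ev[OF MD_affine this] show "eventually (\<lambda>t. invertible (c w *\<^sub>R mat 1 + t *\<^sub>R P w)) (nhds 0)" .
  qed
  have ev: "eventually (\<lambda>t. \<forall>w\<in>V. invertible (c w *\<^sub>R mat 1 + t *\<^sub>R P w)) (nhds 0)"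
    using eventually_ball_finite[OF finV evw] .
  have ev2: "eventually (\<lambda>t. partial (Phi_restr E \<Gamma> z) (shift y b t) a = G t) (nhds 0)"
  proof (rule eventually_mono[OF ev])
    fix t assume inv: "\<forall>w\<in>V. invertible (c w *\<^sub>R mat 1 + t *\<^sub>R P w)"
    have asm: "assemble \<Gamma> z (shift y b t) v = c v *\<^sub>R mat 1 + t *\<^sub>R P v" if "v \<in> V" for v
      using cA that by (simp add: assemble_shift P_def)
    have "\<forall>(v,w)\<in>E. invertible (assemble \<Gamma> z (shift y b t) w)" using inv asm EV by auto
    note pf = partial_formula[OF this, of a]
    have "partial (Phi_restr E \<Gamma> z) (shift y b t) a = G t"
      unfolding pf G_def Q_def
    proof (rule sum.cong[OF refl], clarify)
      fix v w assume "(v,w) \<in> E"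
      then have "v \<in> V" "w \<in> V" using EV by auto
      then show "trace (Dm \<Gamma> a v ** matrix_inv (assemble \<Gamma> z (shift y b t) w)) -
         trace (assemble \<Gamma> z (shift y b t) v ** (matrix_inv (assemble \<Gamma> z (shift y b t) w) ** Dm \<Gamma> a w ** matrix_inv (assemble \<Gamma> z (shift y b t) w))) =
         trace (Dm \<Gamma> a v ** matrix_inv (c w *\<^sub>R mat 1 + t *\<^sub>R P w)) -
         trace ((c v *\<^sub>R mat 1 + t *\<^sub>R P v) ** (matrix_inv (c w *\<^sub>R mat 1 + t *\<^sub>R P w) ** Dm \<Gamma> a w ** matrix_inv (c w *\<^sub>R mat 1 + t *\<^sub>R P w)))"
        by (simp only: asm)
    qed
    then show "partial (Phi_restr E \<Gamma> z) (shift y b t) a = G t" .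
  qed
  have "hessian (Phi_restr E \<Gamma> z) y a b = deriv G 0"
    unfolding hessian_def by (rule deriv_cong_ev[OF ev2 refl])
  also have "\<dots> = (\<Sum>(v,w)\<in>E. 2 * c v / c w^3 * trace (Q w ** P w) - (trace (Q v ** P w) + trace (P v ** Q w)) / c w^2)"
  proof (rule DERIV_imp_deriv)
    show "(G has_field_derivative (\<Sum>(v,w)\<in>E. 2 * c v / c w^3 * trace (Q w ** P w) - (trace (Q v ** P w) + trace (P v ** Q w)) / c w^2)) (at 0)"
      unfolding G_def[abs_def]
    proof (rule DERIV_sum)
      fix e assume "e \<in> E"
      then obtain v w where e: "e = (v,w)" "(v,w) \<in> E" by (cases e) auto
      then have "c v > 0" "c w > 0" using EV cA by auto
      from edge_hess[OF this, of "Q v" "P w" "P v" "Q w"]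
      show "((\<lambda>t. case e of (v, w) \<Rightarrow> trace (Q v ** matrix_inv (c w *\<^sub>R mat 1 + t *\<^sub>R P w))
      - trace ((c v *\<^sub>R mat 1 + t *\<^sub>R P v) ** (matrix_inv (c w *\<^sub>R mat 1 + t *\<^sub>R P w) ** Q w ** matrix_inv (c w *\<^sub>R mat 1 + t *\<^sub>R P w))))
        has_field_derivative (case e of (v,w) \<Rightarrow> 2 * c v / c w^3 * trace (Q w ** P w) - (trace (Q v ** P w) + trace (P v ** Q w)) / c w^2)) (at 0)"
        by (simp only: e prod.case)
    qed
  qed
  finally show ?thesis unfolding P_def Q_def .
qed

lemma trace_zero: "trace (0::real^'n^'n) = 0"
  by (simp add: trace_def)

lemma mmul_add_rdistrib: "(A + B) ** (C::real^'n^'k) = A ** C + B ** C" for A B :: "real^'k^'m"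
  by (simp add: matrix_matrix_mult_def vec_eq_iff sum.distrib distrib_right)

lemma trace_sum_left:
  fixes X :: "'a \<Rightarrow> real^'n^'n"
  assumes "finite S"
  shows "trace ((\<Sum>a\<in>S. h a *\<^sub>R X a) ** N) = (\<Sum>a\<in>S. h a * trace (X a ** N))"
  using assms by (induction S rule: finite_induct)
    (simp_all add: trace_zero mmul_add_rdistrib trace_add mmul_scaleR_left trace_scaleR)

lemma trace_sum_right:
  fixes Y :: "'a \<Rightarrow> real^'n^'n"
  assumes "finite S"
  shows "trace (M ** (\<Sum>b\<in>S. h b *\<^sub>R Y b)) = (\<Sum>b\<in>S. h b * trace (M ** Y b))"
  using assms by (induction S rule: finite_induct)
    (simp_all add: trace_zero matrix_add_ldistrib trace_add mmul_scaleR_right trace_scaleR)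

lemma bilin:
  fixes X Y :: "'a \<Rightarrow> real^'n^'n"
  assumes "finite S"
  shows "(\<Sum>a\<in>S. \<Sum>b\<in>S. h a * h b * trace (X a ** Y b)) = trace ((\<Sum>a\<in>S. h a *\<^sub>R X a) ** (\<Sum>b\<in>S. h b *\<^sub>R Y b))"
  apply (subst trace_sum_left[OF assms])
  apply (subst trace_sum_right[OF assms])
  by (simp add: sum_distrib_left mult.assoc)


lemma sym_of_sym: "sym_of f $ i $ k = sym_of f $ k $ i"
proof (cases "i = k")
  case False
  then show ?thesis by (cases "i \<le> k") (auto simp: sym_of_def)
qed simp

lemma Dm_sym: "Dm \<Gamma> a v $ i $ k = Dm \<Gamma> a v $ k $ i"
proof -
  obtain u p q where a: "a = (u,p,q)" by (cases a) auto
  show ?thesis using sym_of_sym[of "\<lambda>pa qa. if pa = p \<and> qa = q then 1 else 0" i k] unfolding a Dm_def by simp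
qed

lemma sum_mat_entry: "(\<Sum>a\<in>S. h a *\<^sub>R (X a :: real^'n^'m)) $ i $ k = (\<Sum>a\<in>S. h a * X a $ i $ k)"
  by (simp add: sum_component)

lemma trace_prod_sym:
  assumes "\<And>i k. N $ k $ i = N $ i $ k"
  shows "trace (M ** (N::real^'n^'n)) = (\<Sum>i\<in>UNIV. \<Sum>k\<in>UNIV. M $ i $ k * N $ i $ k)"
  using assms by (simp add: trace_def matrix_matrix_mult_def)

lemma sum_lin:
  "(\<Sum>a\<in>S. \<Sum>b\<in>S. h a * h b * (\<alpha> * T1 a b - (T2 a b + T3 a b) / \<beta>)) =
    \<alpha> * (\<Sum>a\<in>S. \<Sum>b\<in>S. h a * h b * T1 a b) - ((\<Sum>a\<in>S. \<Sum>b\<in>S. h a * h b * T2 a b) + (\<Sum>a\<in>S. \<Sum>b\<in>S. h a * h b * T3 a b)) / (\<beta>::real)"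
  by (simp add: sum_subtractf sum.distrib sum_distrib_left sum_divide_distrib right_diff_distrib
      distrib_left add_divide_distrib mult_ac)

theorem mainTheorem17:
  fixes V \<Gamma> :: "'v set" and E :: "('v \<times> 'v) set"
    and z :: "'v \<Rightarrow> real^'d::{finite,linorder}^'d::{finite,linorder}" and y :: "'v \<Rightarrow> 'd::{finite,linorder} \<Rightarrow> 'd::{finite,linorder} \<Rightarrow> real"
  assumes "finite V" and "E \<subseteq> V \<times> V" and "acyclic E"
    and "\<Gamma> \<subseteq> V" and "sinks V E \<subseteq> \<Gamma>" and "sources V E \<subseteq> \<Gamma>" and "V - \<Gamma> \<noteq> {}"
    and "\<forall>v\<in>\<Gamma>. \<exists>c>0. z v = c *\<^sub>R mat 1"
    and "\<forall>v\<in>V. \<exists>c>0. assemble \<Gamma> z y v = c *\<^sub>R mat 1"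
    and "\<forall>a\<in>coords V \<Gamma>. partial (Phi_restr E \<Gamma> z) y a = 0"
  shows "\<forall>h. (\<exists>a\<in>coords V \<Gamma>. h a \<noteq> 0) \<longrightarrow>
           (\<Sum>a\<in>coords V \<Gamma>. \<Sum>b\<in>coords V \<Gamma>. h a * h b * hessian (Phi_restr E \<Gamma> z) y a b) > 0"
proof -
  note A = assms
  have finE: "finite E" using A(1,2) finite_subset by blast
  obtain c where cA: "\<forall>v\<in>V. c v > 0 \<and> assemble \<Gamma> z y v = c v *\<^sub>R mat 1"
    using A(9) by metis
  have "(coords V \<Gamma> :: ('v \<times> 'd \<times> 'd) set) \<subseteq> V \<times> (UNIV::('d \<times> 'd) set)" by (auto simp: coords_def)
  moreover have "finite (V \<times> (UNIV::('d \<times> 'd) set))"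
    by (rule finite_cartesian_product[OF A(1)]) simp
  ultimately have finC: "finite (coords V \<Gamma> :: ('v \<times> 'd \<times> 'd) set)" by (rule finite_subset)
  have invA: "\<forall>(v,w)\<in>E. invertible (assemble \<Gamma> z y w)"
  proof (clarify)
    fix v w assume "(v,w) \<in> E"
    then have "w \<in> V" using A(2) by auto
    then have "c w \<noteq> 0" "assemble \<Gamma> z y w = c w *\<^sub>R mat 1" using cA by auto
    then show "invertible (assemble \<Gamma> z y w)" using scalar_inv(1)[of "c w"] by simp
  qed
  have invc: "matrix_inv (assemble \<Gamma> z y w) = (1 / c w) *\<^sub>R mat 1" if "w \<in> V" for w
  proof -
    have "c w \<noteq> 0" "assemble \<Gamma> z y w = c w *\<^sub>R mat 1" using cA that by auto
    then show ?thesis using scalar_inv(2)[of "c w"] by simp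
  qed
  have crit: "\<forall>u\<in>V-\<Gamma>. (\<Sum>(v,w)\<in>E. (if v = u then 1 / c w else 0) - (if w = u then c v / (c w)^2 else 0)) = 0"
  proof
    fix u assume u: "u \<in> V - \<Gamma>"
    define i0 :: 'd where "i0 = undefined"
    let ?a = "(u, i0, i0)"
    have "?a \<in> coords V \<Gamma>" using u by (simp add: coords_def)
    then have p0: "partial (Phi_restr E \<Gamma> z) y ?a = 0" using A(10) by blast
    have trD: "trace (Dm \<Gamma> ?a x) = (if x = u then 1 else 0)" for x
      using u by (auto simp: Dm_def trace_def sym_of_def)
    have "partial (Phi_restr E \<Gamma> z) y ?a = (\<Sum>(v,w)\<in>E. (if v = u then 1 / c w else 0) - (if w = u then c v / (c w)^2 else 0))"
      unfolding partial_formula[OF invA]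
    proof (rule sum.cong[OF refl], clarify)
      fix v w assume "(v,w) \<in> E"
      then have vw: "v \<in> V" "w \<in> V" using A(2) by auto
      then have cw: "c w > 0" using cA by auto
      have e1: "assemble \<Gamma> z y v = c v *\<^sub>R mat 1" using cA vw by auto
      have e2: "matrix_inv (assemble \<Gamma> z y w) = (1/c w) *\<^sub>R mat 1" using invc vw by auto
      show "trace (Dm \<Gamma> ?a v ** matrix_inv (assemble \<Gamma> z y w)) -
          trace (assemble \<Gamma> z y v ** (matrix_inv (assemble \<Gamma> z y w) ** Dm \<Gamma> ?a w ** matrix_inv (assemble \<Gamma> z y w))) =
          (if v = u then 1 / c w else 0) - (if w = u then c v / (c w)^2 else 0)"
        unfolding e2 e1 using cw
        by (simp add: mmul_scaleR_left mmul_scaleR_right trace_scaleR trD power2_eq_square)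
    qed
    then show "(\<Sum>(v,w)\<in>E. (if v = u then 1 / c w else 0) - (if w = u then c v / (c w)^2 else 0)) = 0"
      using p0 by simp
  qed
  show ?thesis
  proof (intro allI impI)
    fix h :: "'v \<times> 'd \<times> 'd \<Rightarrow> real" assume ex: "\<exists>a\<in>coords V \<Gamma>. h a \<noteq> 0"
    let ?C = "coords V \<Gamma> :: ('v \<times> 'd \<times> 'd) set"
    define Hm where "Hm v = (\<Sum>a\<in>?C. h a *\<^sub>R Dm \<Gamma> a v)" for v
    have Hsym: "Hm v $ k $ i = Hm v $ i $ k" for v i k
      unfolding Hm_def sum_mat_entry using Dm_sym by metis
    define q where "q i k = (\<Sum>(v,w)\<in>E. c v * (Hm w $ i $ k)^2 / (c w)^3 - Hm v $ i $ k * Hm w $ i $ k / (c w)^2)" for i k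
    have "(\<Sum>a\<in>?C. \<Sum>b\<in>?C. h a * h b * hessian (Phi_restr E \<Gamma> z) y a b)
       = (\<Sum>a\<in>?C. \<Sum>b\<in>?C. h a * h b * (\<Sum>(v,w)\<in>E. 2 * c v / c w^3 * trace (Dm \<Gamma> a w ** Dm \<Gamma> b w)
            - (trace (Dm \<Gamma> a v ** Dm \<Gamma> b w) + trace (Dm \<Gamma> b v ** Dm \<Gamma> a w)) / c w^2))"
      using hess_formula[OF A(1) A(2) cA] by simp
    also have "\<dots> = (\<Sum>(v,w)\<in>E. \<Sum>a\<in>?C. \<Sum>b\<in>?C. h a * h b * (2 * c v / c w^3 * trace (Dm \<Gamma> a w ** Dm \<Gamma> b w)
            - (trace (Dm \<Gamma> a v ** Dm \<Gamma> b w) + trace (Dm \<Gamma> b v ** Dm \<Gamma> a w)) / c w^2))"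
      by (simp add: sum_distrib_left sum.swap[of _ E] split_def)
    also have "\<dots> = (\<Sum>(v,w)\<in>E. 2 * c v / c w^3 * trace (Hm w ** Hm w) - (trace (Hm v ** Hm w) + trace (Hm v ** Hm w)) / c w^2)"
    proof (rule sum.cong[OF refl], clarify)
      fix v w
      have t3: "(\<Sum>a\<in>?C. \<Sum>b\<in>?C. h a * h b * trace (Dm \<Gamma> b v ** Dm \<Gamma> a w)) = (\<Sum>a\<in>?C. \<Sum>b\<in>?C. h a * h b * trace (Dm \<Gamma> a v ** Dm \<Gamma> b w))"
        by (subst sum.swap) (simp add: mult.commute)
      show "(\<Sum>a\<in>?C. \<Sum>b\<in>?C. h a * h b * (2 * c v / c w^3 * trace (Dm \<Gamma> a w ** Dm \<Gamma> b w)
            - (trace (Dm \<Gamma> a v ** Dm \<Gamma> b w) + trace (Dm \<Gamma> b v ** Dm \<Gamma> a w)) / c w^2)) =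
          2 * c v / c w^3 * trace (Hm w ** Hm w) - (trace (Hm v ** Hm w) + trace (Hm v ** Hm w)) / c w^2"
        unfolding sum_lin t3 Hm_def bilin[OF finC] ..
    qed
    also have "\<dots> = (\<Sum>(v,w)\<in>E. \<Sum>i\<in>UNIV. \<Sum>k\<in>UNIV. 2 * (c v * (Hm w $ i $ k)^2 / (c w)^3 - Hm v $ i $ k * Hm w $ i $ k / (c w)^2))"
    proof (rule sum.cong[OF refl], clarify)
      fix v w
      show "2 * c v / c w^3 * trace (Hm w ** Hm w) - (trace (Hm v ** Hm w) + trace (Hm v ** Hm w)) / c w^2 =
        (\<Sum>i\<in>UNIV. \<Sum>k\<in>UNIV. 2 * (c v * (Hm w $ i $ k)^2 / (c w)^3 - Hm v $ i $ k * Hm w $ i $ k / (c w)^2))"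
        unfolding trace_prod_sym[OF Hsym]
        by (simp add: sum_distrib_left sum_subtractf sum_divide_distrib power2_eq_square algebra_simps)
    qed
    also have "\<dots> = (\<Sum>i\<in>UNIV. \<Sum>k\<in>UNIV. 2 * q i k)"
      unfolding q_def by (simp add: sum_distrib_left sum.swap[of _ E] split_def)
    finally have Qeq: "(\<Sum>a\<in>?C. \<Sum>b\<in>?C. h a * h b * hessian (Phi_restr E \<Gamma> z) y a b) = (\<Sum>i\<in>UNIV. \<Sum>k\<in>UNIV. 2 * q i k)" .
    have cpos: "\<forall>v\<in>V. c v > 0" using cA by auto
    have x0: "\<forall>v\<in>\<Gamma>. Hm v $ i $ k = 0" for i k
      by (simp add: Hm_def Dm_def sum_mat_entry split_def)
    have qnn: "q i k \<ge> 0" for i k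
      unfolding q_def using scalar_pos(1)[OF A(1) A(2) A(3) A(5) cpos x0 crit] .
    obtain a0 where a0: "a0 \<in> ?C" "h a0 \<noteq> 0" using ex by blast
    then obtain u i0 j0 where a0e: "a0 = (u,i0,j0)" "u \<in> V" "u \<notin> \<Gamma>" "i0 \<le> j0"
      by (auto simp: coords_def)
    have "Hm u $ i0 $ j0 = (\<Sum>a\<in>?C. h a * (if a = a0 then 1 else 0))"
      unfolding Hm_def sum_mat_entry
    proof (rule sum.cong[OF refl])
      fix a assume "a \<in> ?C"
      then obtain u' i' j' where "a = (u',i',j')" by (cases a) auto
      then show "h a * Dm \<Gamma> a u $ i0 $ j0 = h a * (if a = a0 then 1 else 0)"
        using a0e by (auto simp: Dm_def sym_of_def)
    qed
    also have "\<dots> = h a0" using a0 finC by (simp add: if_distrib cong: if_cong)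
    finally have "Hm u $ i0 $ j0 \<noteq> 0" using a0 by simp
    then have "q i0 j0 > 0"
      unfolding q_def using scalar_pos(2)[OF A(1) A(2) A(3) A(5) cpos x0 crit] a0e by blast
    have pos0: "(\<Sum>k\<in>UNIV. 2 * q i0 k) > 0"
      by (rule sum_pos2[of _ j0]) (use \<open>q i0 j0 > 0\<close> qnn in auto)
    have "(\<Sum>i\<in>UNIV. \<Sum>k\<in>UNIV. 2 * q i k) > 0"
      by (rule sum_pos2[of UNIV i0]) (use pos0 qnn in \<open>auto intro: sum_nonneg\<close>)
    then show "(\<Sum>a\<in>?C. \<Sum>b\<in>?C. h a * h b * hessian (Phi_restr E \<Gamma> z) y a b) > 0"
      using Qeq by simp
  qed
qed


end
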